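(* Let $\kappa$, $E$ and $b$ be as in the context, and suppose $\delta(\kappa,b)(E)<1$. Let $g,h:(0,1)\to\mathbb{R}$ be non-decreasing functions with $g(r)\le h(r)$ for all $r\in(0,1)\setminus E$. Put $s(r)=1-b(r)(1-r)$. Then there exists $R\in[0,1)$ such that $g(r)\le h(s(r))$ for all $r\in[R,1)$.
   Context: $\kappa:(0,1)\to(0,1)$ is either the identity $\kappa(x)=x$ or a strictly increasing, continuous, convex function with $\lim_{x\to1^-}\frac{1-x}{\kappa(1-x)}=\infty$ satisfying the doubling-type property: for every $\delta:(0,1)\to(0,1)$ with $\delta(x)\to0$ as $x\to1^-$ and every $\gamma>0$ there is $\tau>0$ with $\lim_{x\to1^-}\frac{\kappa(1-x)}{\kappa((1-x)(\gamma-\delta(x)))}=\lim_{x\to1^-}\frac{\kappa(1-x)}{\kappa((1-x)(\gamma+\delta(x)))}=\tau$. $E\subset[0,1)$ is measurable with $\int_E\frac{dx}{\kappa(1-x)}<\infty$, and $b:(0,1)\to(0,1)$ is a function. The $\kappa$-density of $E$ relative to $b$ is $$\delta(\kappa,b)(E)=\limsup_{r\to1^-}\frac{\frac{\kappa(1-r)}{1-r}\int_{E\cap[r,1)}\frac{dx}{\kappa(1-x)}}{1-b(r)}.$$ *)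

theory Defs
  imports "HOL-Analysis.Analysis"
begin

definition kappa_admissible :: "(real \<Rightarrow> real) \<Rightarrow> bool" where
  "kappa_admissible \<kappa> \<longleftrightarrow>
     (\<forall>x\<in>{0<..<1}. \<kappa> x = x) \<or>
     ((\<forall>x\<in>{0<..<1}. \<kappa> x \<in> {0<..<1}) \<and>
      strict_mono_on {0<..<1} \<kappa> \<and>
      continuous_on {0<..<1} \<kappa> \<and>
      convex_on {0<..<1} \<kappa> \<and>
      filterlim (\<lambda>x. (1 - x) / \<kappa> (1 - x)) at_top (at_left 1) \<and>
      (\<forall>\<delta> :: real \<Rightarrow> real.
         (\<forall>x\<in>{0<..<1}. \<delta> x \<in> {0<..<1}) \<and> (\<delta> \<longlongrightarrow> 0) (at_left 1) \<longrightarrow>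
         (\<forall>\<gamma>>0. \<exists>\<tau>>0.
            ((\<lambda>x. \<kappa> (1 - x) / \<kappa> ((1 - x) * (\<gamma> - \<delta> x))) \<longlongrightarrow> \<tau>) (at_left 1) \<and>
            ((\<lambda>x. \<kappa> (1 - x) / \<kappa> ((1 - x) * (\<gamma> + \<delta> x))) \<longlongrightarrow> \<tau>) (at_left 1))))"

definition kappa_density :: "(real \<Rightarrow> real) \<Rightarrow> (real \<Rightarrow> real) \<Rightarrow> real set \<Rightarrow> ereal" where
  "kappa_density \<kappa> b E =
     Limsup (at_left 1)
       (\<lambda>r. ereal ((\<kappa> (1 - r) / (1 - r)) *
                    set_lebesgue_integral lebesgue (E \<inter> {r..<1}) (\<lambda>x. 1 / \<kappa> (1 - x))
                    / (1 - b r)))"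

end

theory Submission
  imports Defs
begin

lemma limsup_ge_frequently:
  fixes f :: "real \<Rightarrow> ereal"
  assumes "frequently (\<lambda>x. c \<le> f x) F"
  shows "c \<le> Limsup F f"
  unfolding Limsup_def
proof (rule INF_greatest)
  fix P assume "P \<in> {P. eventually P F}"
  then have "eventually P F" by simp
  from frequently_eventually_conj[OF assms this] obtain x where "c \<le> f x" "P x"
    using frequently_ex by blast
  then show "c \<le> Sup (f ` {x. P x})" by (meson SUP_upper2 mem_Collect_eq)
qed

lemma int_ind_aux: "integrable lebesgue (\<lambda>x. indicat_real {r..<(s::real)} x *\<^sub>R c)"
proof (rule integrable_scaleR_left)
  have "{r..<s} \<in> lmeasurable"
    by (intro bounded_set_imp_lmeasurable) auto
  then show "integrable lebesgue (indicat_real {r..<s})"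
    by (intro integrable_real_indicator) (auto intro: fmeasurableD simp: fmeasurable_def)
qed

lemma int_ind_val: "r \<le> s \<Longrightarrow> (LINT x|lebesgue. indicat_real {r..<(s::real)} x *\<^sub>R c) = (s - r) * c"
  by (simp add: integral_scaleR_left)

theorem lemma2:
  fixes \<kappa> b g h :: "real \<Rightarrow> real" and E :: "real set"
  assumes kappa: "kappa_admissible \<kappa>"
    and E_sub: "E \<subseteq> {0..<1}"
    and E_meas: "E \<in> sets lebesgue"
    and E_int: "(\<integral>\<^sup>+ x\<in>E. ennreal (1 / \<kappa> (1 - x)) \<partial>lebesgue) < \<infinity>"
    and b_range: "\<forall>r\<in>{0<..<1}. b r \<in> {0<..<1}"
    and dens: "kappa_density \<kappa> b E < 1"
    and g_mono: "mono_on {0<..<1} g"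
    and h_mono: "mono_on {0<..<1} h"
    and gh: "\<forall>r\<in>{0<..<1} - E. g r \<le> h r"
  shows "\<exists>R\<in>{0..<1}. \<forall>r\<in>{R..<1} \<inter> {0<..}. g r \<le> h (1 - b r * (1 - r))"
proof -
  define s where "s r = 1 - b r * (1 - r)" for r
  have K1: "\<kappa> x > 0" if "x \<in> {0<..<1}" for x
    using kappa that unfolding kappa_admissible_def by auto
  have K2: "\<kappa> x \<le> \<kappa> y" if "0 < x" "x \<le> y" "y < 1" for x y
    using kappa that unfolding kappa_admissible_def
    by (auto intro: strict_mono_on_leD)
  have K3: "continuous_on {0<..<1} \<kappa>"
  proof (cases "\<forall>x\<in>{0<..<1}. \<kappa> x = x")
    case True
    then show ?thesis using continuous_on_cong[of "{0<..<1}" "{0<..<1}" \<kappa> "\<lambda>x. x"]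
      by (simp add: continuous_on_id)
  next
    case False
    then show ?thesis using kappa unfolding kappa_admissible_def by auto
  qed
  define F where "F x = 1 / \<kappa> (1 - x)" for x
  have Fpos: "F x > 0" if "x \<in> {0<..<1}" for x
    using K1[of "1 - x"] that unfolding F_def by auto
  have Fcont: "continuous_on {0<..<1} F"
  proof -
    have nz: "\<kappa> (1 - x) \<noteq> 0" if "x \<in> {0<..<1}" for x using K1[of "1 - x"] that by auto
    have "continuous_on {0<..<1} (\<lambda>x. \<kappa> (1 - x))"
      by (rule continuous_on_compose2[OF K3]) (auto intro!: continuous_intros)
    then show ?thesis unfolding F_def
      by (rule continuous_on_divide[OF continuous_on_const]) (use nz in auto)
  qed
  have Gmeas: "(\<lambda>x. indicator {0<..<1} x *\<^sub>R F x) \<in> borel_measurable lebesgue"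
    using borel_measurable_continuous_on_indicator[OF _ Fcont]
    by (metis measurable_lborel2 measurable_completion sets_lborel borel_open open_greaterThanLessThan)
  have ratio: "1 \<le> (\<kappa> (1 - r) / (1 - r)) *
                    set_lebesgue_integral lebesgue (E \<inter> {r..<1}) (\<lambda>x. 1 / \<kappa> (1 - x))
                    / (1 - b r)"
    if r: "0 < r" "r < 1" and sub: "{r..<s r} \<subseteq> E" for r
  proof -
    define A where "A = E \<inter> {r..<1}"
    have br: "0 < b r" "b r < 1" using b_range r by auto
    have sr: "r < s r" "s r < 1" unfolding s_def using br r mult_pos_pos[of "1 - r" "1 - b r"] mult_pos_pos[of "1 - r" "b r"]
      by (auto simp: algebra_simps)
    have A01: "A \<subseteq> {0<..<1}" unfolding A_def using E_sub r by auto
    have Asets: "A \<in> sets lebesgue" unfolding A_def using E_meas by auto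
    have eqA: "(\<lambda>x. indicator A x *\<^sub>R F x) = (\<lambda>x. indicator A x * (indicator {0<..<1} x *\<^sub>R F x))"
      using A01 by (auto simp: indicator_def fun_eq_iff)
    have meas: "(\<lambda>x. indicator A x *\<^sub>R F x) \<in> borel_measurable lebesgue"
      unfolding eqA using Asets Gmeas by measurable
    have "(\<integral>\<^sup>+ x. ennreal (norm (indicator A x *\<^sub>R F x)) \<partial>lebesgue)
        \<le> (\<integral>\<^sup>+ x\<in>E. ennreal (1 / \<kappa> (1 - x)) \<partial>lebesgue)"
      apply (rule nn_integral_mono)
      using A01 Fpos unfolding A_def F_def
      by (auto simp: indicator_def less_imp_le)
    then have int: "integrable lebesgue (\<lambda>x. indicator A x *\<^sub>R F x)"
      using E_int meas by (intro integrableI_bounded) auto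
    have int2: "integrable lebesgue (\<lambda>x. indicator {r..<s r} x *\<^sub>R (1 / \<kappa> (1 - r)))"
      by (rule int_ind_aux)
    have "(LINT x|lebesgue. indicator {r..<s r} x *\<^sub>R (1 / \<kappa> (1 - r)))
          \<le> (LINT x|lebesgue. indicator A x *\<^sub>R F x)"
    proof (rule integral_mono[OF int2 int])
      fix x
      show "indicator {r..<s r} x *\<^sub>R (1 / \<kappa> (1 - r)) \<le> indicator A x *\<^sub>R F x"
      proof (cases "x \<in> {r..<s r}")
        case True
        then have "x \<in> A" using sub sr unfolding A_def by auto
        moreover have "1 / \<kappa> (1 - r) \<le> F x" unfolding F_def
          using True sr r K1[of "1-x"] K2[of "1 - x" "1 - r"]
          by (intro divide_left_mono) auto
        ultimately show ?thesis using True by simp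
      next
        case False
        then show ?thesis using A01 Fpos by (auto simp: indicator_def less_imp_le)
      qed
    qed
    moreover have "(LINT x|lebesgue. indicator {r..<s r} x *\<^sub>R (1 / \<kappa> (1 - r)))
        = (s r - r) / \<kappa> (1 - r)"
      using sr int_ind_val[of r "s r" "1 / \<kappa> (1 - r)"] by simp
    ultimately have "(s r - r) / \<kappa> (1 - r) \<le> (LINT x|lebesgue. indicator A x *\<^sub>R F x)"
      by linarith
    then have I: "(s r - r) / \<kappa> (1 - r) \<le> set_lebesgue_integral lebesgue A (\<lambda>x. 1 / \<kappa> (1 - x))"
      unfolding set_lebesgue_integral_def F_def .
    have k: "\<kappa> (1 - r) > 0" using K1 r by auto
    have "s r - r = (1 - r) * (1 - b r)" unfolding s_def by (simp add: algebra_simps)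
    moreover have "1 = (\<kappa> (1 - r) / (1 - r)) * (((1 - r) * (1 - b r)) / \<kappa> (1 - r)) / (1 - b r)"
    proof -
      have "1 - r \<noteq> 0" "1 - b r \<noteq> 0" "\<kappa> (1 - r) \<noteq> 0" using k r br by auto
      then show ?thesis by simp
    qed
    ultimately have "1 = (\<kappa> (1 - r) / (1 - r)) * ((s r - r) / \<kappa> (1 - r)) / (1 - b r)"
      by (simp only:)
    also have "\<dots> \<le> (\<kappa> (1 - r) / (1 - r)) * set_lebesgue_integral lebesgue A (\<lambda>x. 1 / \<kappa> (1 - x)) / (1 - b r)"
      using I k r br by (intro divide_right_mono mult_left_mono) auto
    finally show ?thesis unfolding A_def .
  qed
  have ev: "eventually (\<lambda>r. \<not> {r..<s r} \<subseteq> E) (at_left 1)"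
  proof (rule ccontr)
    assume "\<not> ?thesis"
    then have fr: "frequently (\<lambda>r. {r..<s r} \<subseteq> E) (at_left 1)"
      by (simp add: not_eventually)
    have e01: "eventually (\<lambda>r. r \<in> {0<..<1}) (at_left (1::real))"
      by (rule eventually_at_left_real) simp
    define Q where "Q r = ((\<kappa> (1 - r) / (1 - r)) *
                    set_lebesgue_integral lebesgue (E \<inter> {r..<1}) (\<lambda>x. 1 / \<kappa> (1 - x))
                    / (1 - b r))" for r
    have e2: "eventually (\<lambda>r. {r..<s r} \<subseteq> E \<longrightarrow> (1::ereal) \<le> ereal (Q r)) (at_left (1::real))"
    proof (rule eventually_mono[OF e01], intro impI)
      fix r :: real assume "r \<in> {0<..<1}" "{r..<s r} \<subseteq> E"
      then have "1 \<le> Q r" unfolding Q_def using ratio[of r] by auto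
      then show "(1::ereal) \<le> ereal (Q r)" by (simp add: one_ereal_def)
    qed
    have "frequently (\<lambda>r. (1::ereal) \<le> ereal (Q r)) (at_left 1)"
      by (rule frequently_mp[OF e2 fr])
    then have "1 \<le> kappa_density \<kappa> b E"
      unfolding kappa_density_def Q_def by (rule limsup_ge_frequently)
    then show False using dens by simp
  qed
  then obtain c where c: "c < 1" "\<And>y. c < y \<Longrightarrow> y < 1 \<Longrightarrow> \<not> {y..<s y} \<subseteq> E"
    unfolding eventually_at_left_field by blast
  define R where "R = max 0 ((c + 1) / 2)"
  show ?thesis
  proof (rule bexI[of _ R], intro ballI)
    fix r assume "r \<in> {R..<1} \<inter> {0<..}"
    then have r: "0 < r" "r < 1" "c < r" unfolding R_def using c by auto
    have br: "0 < b r" "b r < 1" using b_range r by auto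
    have sr: "r < s r" "s r < 1" unfolding s_def using br r mult_pos_pos[of "1 - r" "1 - b r"] mult_pos_pos[of "1 - r" "b r"]
      by (auto simp: algebra_simps)
    obtain t where t: "t \<in> {r..<s r}" "t \<notin> E" using c(2)[OF r(3) r(2)] by blast
    have t01: "t \<in> {0<..<1}" "r \<in> {0<..<1}" "s r \<in> {0<..<1}" "r \<le> t" "t \<le> s r"
      using t r sr by auto
    have "g r \<le> g t" by (rule mono_onD[OF g_mono t01(2,1,4)])
    also have "\<dots> \<le> h t" using gh t01(1) t(2) by blast
    also have "\<dots> \<le> h (s r)" by (rule mono_onD[OF h_mono t01(1,3,5)])
    finally show "g r \<le> h (1 - b r * (1 - r))" unfolding s_def .
  next
    show "R \<in> {0..<1}" unfolding R_def using c by auto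
  qed
qed

end
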